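(* Suppose Algorithm SC is run on a source function $b$ with $|b(v)|\le\deg(v)$ for all $v$, with $\alpha\in(0,1/4]$ and $T$ satisfying $\alpha^2T\ge\ln(2n+5Tn^2)$, and completes all $T$ rounds without terminating in step (4). Then $|b(v)-(B\bar f)_v|\le5\alpha\deg(v)$ for every $v\in V$.
   Context: Let $G=(V,E)$ be a unit-capacity undirected graph, $n=|V|\ge3$, every vertex of degree $\deg(v)\ge1$, each edge with a fixed arbitrary orientation; $B\in\mathbb R^{V\times E}$ is the incidence matrix (column $(u,v)$ has $+1$ in row $u$, $-1$ in row $v$, $0$ elsewhere). Algorithm SC takes $b\in\mathbb R^V$ with $|b(v)|\le\deg(v)$ for all $v$, $\alpha\in(0,1/4]$ and an integer $T\ge1$. Set $w^1_{v,+}=w^1_{v,-}=1$ for all $v$. For $i=1,\dots,T$: (1) for $\circ\in\{+,-\}$, $\tilde w^i_{v,\circ}=w^i_{v,\circ}$ if $w^i_{v,\circ}\ge n$ and $\tilde w^i_{v,\circ}=0$ otherwise; (2) $\tilde\phi^i_v=(\tilde w^i_{v,+}-\tilde w^i_{v,-})/\deg(v)$; (3) for each edge $(u,v)$, $f^i(u,v)=+1$ if $\tilde\phi^i_u>\tilde\phi^i_v$, $-1$ if $\tilde\phi^i_u<\tilde\phi^i_v$, $0$ otherwise; (4) if $\langle\tilde\phi^i,b\rangle>\langle\tilde\phi^i,Bf^i\rangle$, terminate; (5) $r^i_v=(b(v)-(Bf^i)_v)/\deg(v)$; (6) $w^{i+1}_{v,+}=w^i_{v,+}(1+\alpha r^i_v)$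 and $w^{i+1}_{v,-}=w^i_{v,-}(1-\alpha r^i_v)$. If all $T$ rounds complete, output $\bar f=\frac1T\sum_{i=1}^Tf^i$. *)

theory Defs
  imports Complex_Main
begin

text \<open>Graph: finite vertex set V, oriented edge set E (each undirected edge listed once,
  as an ordered pair (u,v) giving its fixed orientation).\<close>

definition deg :: "('a \<times> 'a) set \<Rightarrow> 'a \<Rightarrow> nat" where
  "deg E v = card {e \<in> E. fst e = v \<or> snd e = v}"

text \<open>(B f)_v for the incidence matrix B: column (u,v) has +1 in row u and -1 in row v.\<close>
definition inc_mult :: "('a \<times> 'a) set \<Rightarrow> ('a \<times> 'a \<Rightarrow> real) \<Rightarrow> 'a \<Rightarrow> real" where
  "inc_mult E f v = (\<Sum>e\<in>E. (if fst e = v then f e else 0) - (if snd e = v then f e else 0))"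

definition vinner :: "'a set \<Rightarrow> ('a \<Rightarrow> real) \<Rightarrow> ('a \<Rightarrow> real) \<Rightarrow> real" where
  "vinner V x y = (\<Sum>v\<in>V. x v * y v)"

definition trunc_w :: "nat \<Rightarrow> real \<Rightarrow> real" where
  "trunc_w n x = (if x \<ge> real n then x else 0)"

text \<open>Weights w = (w_+, w_-). Step (2): potential.\<close>
definition sc_phi :: "'a set \<Rightarrow> ('a \<times> 'a) set \<Rightarrow> ('a \<Rightarrow> real) \<times> ('a \<Rightarrow> real) \<Rightarrow> 'a \<Rightarrow> real" where
  "sc_phi V E w v = (trunc_w (card V) (fst w v) - trunc_w (card V) (snd w v)) / real (deg E v)"

definition sc_flow :: "('a \<Rightarrow> real) \<Rightarrow> 'a \<times> 'a \<Rightarrow> real" where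
  "sc_flow phi e = (if phi (fst e) > phi (snd e) then 1
                    else if phi (fst e) < phi (snd e) then -1 else 0)"

definition sc_res :: "'a set \<Rightarrow> ('a \<times> 'a) set \<Rightarrow> ('a \<Rightarrow> real) \<Rightarrow> ('a \<Rightarrow> real) \<times> ('a \<Rightarrow> real) \<Rightarrow> 'a \<Rightarrow> real" where
  "sc_res V E b w v = (b v - inc_mult E (sc_flow (sc_phi V E w)) v) / real (deg E v)"

definition sc_step :: "'a set \<Rightarrow> ('a \<times> 'a) set \<Rightarrow> ('a \<Rightarrow> real) \<Rightarrow> real
    \<Rightarrow> ('a \<Rightarrow> real) \<times> ('a \<Rightarrow> real) \<Rightarrow> ('a \<Rightarrow> real) \<times> ('a \<Rightarrow> real)" where
  "sc_step V E b \<alpha> w =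
     ((\<lambda>v. fst w v * (1 + \<alpha> * sc_res V E b w v)),
      (\<lambda>v. snd w v * (1 - \<alpha> * sc_res V E b w v)))"

text \<open>w^i for i \<ge> 1 (w^1 = all ones).\<close>
definition sc_w :: "'a set \<Rightarrow> ('a \<times> 'a) set \<Rightarrow> ('a \<Rightarrow> real) \<Rightarrow> real \<Rightarrow> nat
    \<Rightarrow> ('a \<Rightarrow> real) \<times> ('a \<Rightarrow> real)" where
  "sc_w V E b \<alpha> i = (sc_step V E b \<alpha> ^^ (i - 1)) ((\<lambda>v. 1), (\<lambda>v. 1))"

definition sc_phi_i :: "'a set \<Rightarrow> ('a \<times> 'a) set \<Rightarrow> ('a \<Rightarrow> real) \<Rightarrow> real \<Rightarrow> nat \<Rightarrow> 'a \<Rightarrow> real" where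
  "sc_phi_i V E b \<alpha> i = sc_phi V E (sc_w V E b \<alpha> i)"

definition sc_f :: "'a set \<Rightarrow> ('a \<times> 'a) set \<Rightarrow> ('a \<Rightarrow> real) \<Rightarrow> real \<Rightarrow> nat \<Rightarrow> 'a \<times> 'a \<Rightarrow> real" where
  "sc_f V E b \<alpha> i = sc_flow (sc_phi_i V E b \<alpha> i)"

definition sc_terminates_at :: "'a set \<Rightarrow> ('a \<times> 'a) set \<Rightarrow> ('a \<Rightarrow> real) \<Rightarrow> real \<Rightarrow> nat \<Rightarrow> bool" where
  "sc_terminates_at V E b \<alpha> i =
     (vinner V (sc_phi_i V E b \<alpha> i) b > vinner V (sc_phi_i V E b \<alpha> i) (inc_mult E (sc_f V E b \<alpha> i)))"

definition sc_fbar :: "'a set \<Rightarrow> ('a \<times> 'a) set \<Rightarrow> ('a \<Rightarrow> real) \<Rightarrow> real \<Rightarrow> nat \<Rightarrow> 'a \<times> 'a \<Rightarrow> real" where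
  "sc_fbar V E b \<alpha> T e = (\<Sum>i=1..T. sc_f V E b \<alpha> i e) / real T"

end

theory Submission imports Defs begin

lemma ln_lb_neg:
  fixes y :: real assumes "-1/2 \<le> y" "y \<le> 0"
  shows "y - y^2 \<le> ln (1 + y)"
proof -
  let ?h = "\<lambda>x::real. ln (1 + x) - x + x^2"
  have "?h 0 \<le> ?h y"
  proof (rule DERIV_nonpos_imp_nonincreasing[OF assms(2)])
    fix x :: real assume x: "y \<le> x" "x \<le> 0"
    have "1 + x > 0" using x assms by linarith
    have D: "DERIV ?h x :> (1/(1+x) - 1 + 2*x)"
      using \<open>1 + x > 0\<close> by (auto intro!: derivative_eq_intros)
    have "1/(1+x) - 1 + 2*x = x*(1+2*x)/(1+x)"
      using \<open>1 + x > 0\<close> by (simp add: field_simps)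
    also have "\<dots> \<le> 0"
      using x assms \<open>1 + x > 0\<close> by (intro divide_nonpos_pos mult_nonpos_nonneg) auto
    finally show "\<exists>d. DERIV ?h x :> d \<and> d \<le> 0" using D by blast
  qed
  then show ?thesis by simp
qed

lemma ln_lb:
  fixes y :: real assumes "\<bar>y\<bar> \<le> 1/2"
  shows "y - y^2 \<le> ln (1 + y)"
proof (cases "y \<ge> 0")
  case True then show ?thesis using assms ln_one_plus_pos_lower_bound[of y] by simp
next
  case False then show ?thesis using assms ln_lb_neg[of y] by simp
qed

lemma inc_mult_alt:
  "inc_mult E f v = (\<Sum>e\<in>E. f e * ((if fst e = v then 1 else 0) - (if snd e = v then 1 else 0)))"
  unfolding inc_mult_def by (rule sum.cong) (auto simp: algebra_simps)

lemma inc_mult_lin: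
  fixes E :: "('a \<times> 'a) set" and v :: 'a
  assumes "finite I"
  shows "inc_mult E (\<lambda>e. (\<Sum>i\<in>I. g i e) / c) v = (\<Sum>i\<in>I. inc_mult E (g i) v) / c"
proof -
  define d where "d e = ((if fst e = v then 1 else 0) - (if snd e = v then 1 else 0) :: real)" for e
  have "inc_mult E (\<lambda>e. (\<Sum>i\<in>I. g i e) / c) v = (\<Sum>e\<in>E. \<Sum>i\<in>I. g i e * d e / c)"
    unfolding inc_mult_alt d_def[symmetric]
    by (rule sum.cong) (simp_all add: sum_divide_distrib sum_distrib_right)
  also have "\<dots> = (\<Sum>i\<in>I. \<Sum>e\<in>E. g i e * d e / c)" by (rule sum.swap)
  also have "\<dots> = (\<Sum>i\<in>I. inc_mult E (g i) v) / c"
    unfolding inc_mult_alt d_def[symmetric] sum_divide_distrib by simp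
  finally show ?thesis .
qed

lemma inc_bound:
  assumes "finite E" "\<And>e. \<bar>f e\<bar> \<le> 1"
  shows "\<bar>inc_mult E f v\<bar> \<le> real (deg E v)"
proof -
  have "\<bar>inc_mult E f v\<bar> \<le> (\<Sum>e\<in>E. \<bar>(if fst e = v then f e else 0) - (if snd e = v then f e else 0)\<bar>)"
    unfolding inc_mult_def by (rule sum_abs)
  also have "\<dots> \<le> (\<Sum>e\<in>E. if fst e = v \<or> snd e = v then 1 else 0)"
  proof (rule sum_mono)
    fix e show "\<bar>(if fst e = v then f e else 0) - (if snd e = v then f e else 0)\<bar> \<le> (if fst e = v \<or> snd e = v then 1 else 0)"
      using assms(2)[of e] by auto
  qed
  also have "\<dots> = real (deg E v)"
    unfolding deg_def using assms(1) by (simp add: sum.inter_filter[symmetric])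
  finally show ?thesis .
qed

lemma flow_bound: "\<bar>sc_flow phi e\<bar> \<le> 1" by (simp add: sc_flow_def)

theorem lemma2p6:
  fixes V :: "'a set" and E :: "('a \<times> 'a) set" and b :: "'a \<Rightarrow> real"
    and \<alpha> :: real and T :: nat
  assumes "finite V" and "card V \<ge> 3"
    and "E \<subseteq> V \<times> V"
    and "\<And>u v. (u, v) \<in> E \<Longrightarrow> u \<noteq> v"
    and "\<And>u v. (u, v) \<in> E \<Longrightarrow> (v, u) \<notin> E"
    and "\<And>v. v \<in> V \<Longrightarrow> deg E v \<ge> 1"
    and "\<And>v. v \<in> V \<Longrightarrow> \<bar>b v\<bar> \<le> real (deg E v)"
    and "0 < \<alpha>" and "\<alpha> \<le> 1/4"
    and "T \<ge> 1"
    and "\<alpha>^2 * real T \<ge> ln (2 * real (card V) + 5 * real T * real (card V)^2)"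
    and "\<And>i. i \<in> {1..T} \<Longrightarrow> \<not> sc_terminates_at V E b \<alpha> i"
  shows "\<forall>v\<in>V. \<bar>b v - inc_mult E (sc_fbar V E b \<alpha> T) v\<bar> \<le> 5 * \<alpha> * real (deg E v)"
proof -
  note finV = assms(1) and degpos = assms(6) and bb = assms(7) and apos = assms(8)
    and ale = assms(9) and T1 = assms(10) and lnT = assms(11) and nonterm = assms(12)
  define n where "n = card V"
  define W where "W = sc_w V E b \<alpha>"
  define r where "r = (\<lambda>i v. sc_res V E b (W i) v)"
  define Bf where "Bf = (\<lambda>i v. inc_mult E (sc_f V E b \<alpha> i) v)"
  have finE: "finite E" using assms(3) finV finite_cartesian_product finite_subset by blast
  have W1: "W (Suc 0) = ((\<lambda>v. 1), (\<lambda>v. 1))" by (simp add: W_def sc_w_def)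
  have WS: "W (Suc (Suc k)) = sc_step V E b \<alpha> (W (Suc k))" for k
    by (simp add: W_def sc_w_def)
  have rdef: "r i v = (b v - Bf i v) / real (deg E v)" for i v
    by (simp add: r_def Bf_def sc_res_def sc_f_def sc_phi_i_def W_def)
  have Bfb: "\<bar>Bf i v\<bar> \<le> real (deg E v)" for i v
    unfolding Bf_def sc_f_def by (rule inc_bound[OF finE flow_bound])
  have rb: "\<bar>r i v\<bar> \<le> 2" if "v \<in> V" for i v
  proof -
    have d: "real (deg E v) \<ge> 1" using degpos[OF that] by simp
    have "\<bar>b v - Bf i v\<bar> \<le> 2 * real (deg E v)" using bb[OF that] Bfb[of i v] by linarith
    then show ?thesis using d unfolding rdef by (simp add: abs_divide pos_divide_le_eq)
  qed
  have ar: "\<bar>\<alpha> * r i v\<bar> \<le> 1/2" if "v \<in> V" for i v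
  proof -
    have "\<bar>\<alpha> * r i v\<bar> = \<alpha> * \<bar>r i v\<bar>" using apos by (simp add: abs_mult)
    also have "\<dots> \<le> (1/4) * 2" using rb[OF that, of i] ale apos by (intro mult_mono) auto
    finally show ?thesis by simp
  qed
  have prodp: "fst (W (Suc k)) v = (\<Prod>i\<in>{1..k}. 1 + \<alpha> * r i v)" for k v
  proof (induction k)
    case 0 then show ?case by (simp add: W1)
  next
    case (Suc k) then show ?case
      by (simp add: WS sc_step_def r_def prod.nat_ivl_Suc' mult.commute)
  qed
  have prodm: "snd (W (Suc k)) v = (\<Prod>i\<in>{1..k}. 1 - \<alpha> * r i v)" for k v
  proof (induction k)
    case 0 then show ?case by (simp add: W1)
  next
    case (Suc k) then show ?case
      by (simp add: WS sc_step_def r_def prod.nat_ivl_Suc' mult.commute)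
  qed
  have fpos: "1 + \<alpha> * r i v > 0" "1 - \<alpha> * r i v > 0" if "v \<in> V" for i v
    using ar[OF that, of i] by (auto simp: abs_le_iff)
  have Wpos: "fst (W (Suc k)) v > 0 \<and> snd (W (Suc k)) v > 0" if "v \<in> V" for k v
    unfolding prodp prodm using fpos[OF that] by (auto intro!: prod_pos)
  define \<Phi> where "\<Phi> k = (\<Sum>v\<in>V. fst (W k) v + snd (W k) v)" for k
  have Phistep: "\<Phi> (Suc (Suc k)) \<le> \<Phi> (Suc k) + real n ^ 2" if "Suc k \<le> T" for k
  proof -
    define i where "i = Suc k"
    have i1: "i \<in> {1..T}" using that by (simp add: i_def)
    define wp where "wp = fst (W i)"
    define wm where "wm = snd (W i)"
    define tp where "tp v = trunc_w n (wp v)" for v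
    define tm where "tm v = trunc_w n (wm v)" for v
    define ph where "ph = sc_phi_i V E b \<alpha> i"
    have phdef: "ph v = (tp v - tm v) / real (deg E v)" for v
      by (simp add: ph_def sc_phi_i_def sc_phi_def tp_def tm_def wp_def wm_def W_def n_def)
    have Pd: "\<Phi> (Suc i) = \<Phi> i + \<alpha> * (\<Sum>v\<in>V. r i v * (wp v - wm v))"
      unfolding \<Phi>_def i_def WS wp_def wm_def
      by (simp add: sc_step_def r_def sum_distrib_left sum.distrib[symmetric] algebra_simps)
    have split: "(\<Sum>v\<in>V. r i v * (wp v - wm v)) =
       (\<Sum>v\<in>V. r i v * (tp v - tm v)) + (\<Sum>v\<in>V. r i v * ((wp v - tp v) - (wm v - tm v)))"
      by (simp add: sum.distrib[symmetric] algebra_simps)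
    have s1: "(\<Sum>v\<in>V. r i v * (tp v - tm v)) \<le> 0"
    proof -
      have "(\<Sum>v\<in>V. r i v * (tp v - tm v)) = vinner V ph b - vinner V ph (inc_mult E (sc_f V E b \<alpha> i))"
        unfolding vinner_def sum_subtractf[symmetric]
        by (rule sum.cong) (auto simp: rdef phdef Bf_def divide_simps algebra_simps)
      also have "\<dots> \<le> 0" using nonterm[OF i1] unfolding sc_terminates_at_def ph_def by simp
      finally show ?thesis .
    qed
    have s2: "(\<Sum>v\<in>V. r i v * ((wp v - tp v) - (wm v - tm v))) \<le> real n * (2 * real n)"
    proof -
      have "(\<Sum>v\<in>V. r i v * ((wp v - tp v) - (wm v - tm v))) \<le> (\<Sum>v\<in>V. 2 * real n)"
      proof (rule sum_mono)
        fix v assume v: "v \<in> V"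
        have p: "wp v > 0" "wm v > 0" using Wpos[OF v, of k] by (simp_all add: wp_def wm_def i_def)
        have "0 \<le> wp v - tp v" "wp v - tp v \<le> real n" "0 \<le> wm v - tm v" "wm v - tm v \<le> real n"
          using p by (auto simp: tp_def tm_def trunc_w_def)
        then have "\<bar>(wp v - tp v) - (wm v - tm v)\<bar> \<le> real n" by linarith
        then have "\<bar>r i v * ((wp v - tp v) - (wm v - tm v))\<bar> \<le> 2 * real n"
          unfolding abs_mult using rb[OF v, of i] by (intro mult_mono) auto
        then show "r i v * ((wp v - tp v) - (wm v - tm v)) \<le> 2 * real n" by linarith
      qed
      also have "\<dots> = real n * (2 * real n)" by (simp add: n_def)
      finally show ?thesis .
    qed
    have "\<alpha> * (\<Sum>v\<in>V. r i v * (wp v - wm v)) \<le> \<alpha> * (2 * real n ^ 2)"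
      using split s1 s2 apos by (intro mult_left_mono) (auto simp: power2_eq_square)
    also have "\<dots> = (2 * \<alpha>) * real n ^ 2" by simp
    also have "\<dots> \<le> 1 * real n ^ 2" using ale apos by (intro mult_right_mono) auto
    finally show ?thesis using Pd by (simp add: i_def)
  qed
  have Phi1: "\<Phi> (Suc 0) = 2 * real n" by (simp add: \<Phi>_def W1 n_def)
  have Phib: "\<Phi> (Suc k) \<le> 2 * real n + real k * real n ^ 2" if "k \<le> T" for k
    using that
  proof (induction k)
    case 0 then show ?case using Phi1 by simp
  next
    case (Suc k) then show ?case using Phistep[of k] by (simp add: algebra_simps)
  qed
  have PhiT: "\<Phi> (Suc T) \<le> 2 * real n + 5 * real T * real n ^ 2"
  proof -
    have "real T * real n ^ 2 \<le> 5 * real T * real n ^ 2" by simp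
    then show ?thesis using Phib[of T] by linarith
  qed
  have npos: "real n > 0" using assms(2) by (simp add: n_def)
  have bound: "\<alpha> * (\<Sum>i\<in>{1..T}. s * r i v) \<le> 5 * \<alpha>^2 * real T"
    if v: "v \<in> V" and s: "s = 1 \<or> s = -1" and 
       wdef: "w = (\<Prod>i\<in>{1..T}. 1 + \<alpha> * (s * r i v))"
       and wle: "w \<le> \<Phi> (Suc T)" for v s w
  proof -
    have fp: "1 + \<alpha> * (s * r i v) > 0" for i using fpos[OF v, of i] s by auto
    have "w > 0" unfolding wdef using fp by (intro prod_pos) (auto simp: less_imp_le)
    have "ln w = (\<Sum>i\<in>{1..T}. ln (1 + \<alpha> * (s * r i v)))"
      unfolding wdef using fp by (intro ln_prod) (simp_all, metis less_irrefl)
    also have "\<dots> \<ge> (\<Sum>i\<in>{1..T}. \<alpha> * (s * r i v) - 4 * \<alpha>^2)"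
    proof (rule sum_mono)
      fix i
      have a: "\<bar>\<alpha> * (s * r i v)\<bar> \<le> 1/2" using ar[OF v, of i] s by (auto simp: abs_mult)
      have "(\<alpha> * (s * r i v))^2 = \<alpha>^2 * (r i v)^2" using s by (auto simp: power_mult_distrib)
      also have "\<dots> \<le> \<alpha>^2 * 4"
      proof (rule mult_left_mono)
        have "\<bar>r i v\<bar>^2 \<le> 2^2" using rb[OF v, of i] by (intro power_mono) auto
        then show "(r i v)^2 \<le> 4" by simp
      qed simp
      finally show "\<alpha> * (s * r i v) - 4 * \<alpha>^2 \<le> ln (1 + \<alpha> * (s * r i v))"
        using ln_lb[OF a] by simp
    qed
    finally have l1: "\<alpha> * (\<Sum>i\<in>{1..T}. s * r i v) - 4 * \<alpha>^2 * real T \<le> ln w"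
      by (simp add: sum_subtractf sum_distrib_left mult.commute mult.left_commute)
    have "ln w \<le> ln (2 * real n + 5 * real T * real n ^ 2)"
      using \<open>w > 0\<close> wle PhiT npos by (subst ln_le_cancel_iff) auto
    also have "\<dots> \<le> \<alpha>^2 * real T" using lnT by (simp add: n_def)
    finally show ?thesis using l1 by simp
  qed
  show ?thesis
  proof
    fix v assume v: "v \<in> V"
    define S where "S = (\<Sum>i\<in>{1..T}. r i v)"
    have fle: "fst (W (Suc T)) v \<le> \<Phi> (Suc T)" "snd (W (Suc T)) v \<le> \<Phi> (Suc T)"
    proof -
      have "(\<lambda>u. fst (W (Suc T)) u + snd (W (Suc T)) u) v \<le> \<Phi> (Suc T)"
        unfolding \<Phi>_def using v finV Wpos
        by (intro member_le_sum) (auto intro: add_nonneg_nonneg less_imp_le)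
      then show "fst (W (Suc T)) v \<le> \<Phi> (Suc T)" "snd (W (Suc T)) v \<le> \<Phi> (Suc T)"
        using Wpos[OF v, of T] by auto
    qed
    have b1: "\<alpha> * S \<le> 5 * \<alpha>^2 * real T"
      using bound[OF v, of 1 "fst (W (Suc T)) v"] fle prodp[of T v] by (simp add: S_def)
    have b2: "\<alpha> * (- S) \<le> 5 * \<alpha>^2 * real T"
      using bound[OF v, of "-1" "snd (W (Suc T)) v"] fle prodm[of T v]
      by (simp add: S_def sum_negf)
    have Sb: "\<bar>S\<bar> \<le> 5 * \<alpha> * real T"
    proof -
      have "\<alpha> * \<bar>S\<bar> \<le> \<alpha> * (5 * \<alpha> * real T)" using b1 b2 by (auto simp: abs_if power2_eq_square algebra_simps)
      then show ?thesis using apos by simp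
    qed
    have d: "real (deg E v) \<ge> 1" using degpos[OF v] by simp
    have Tp: "real T > 0" using T1 by simp
    have fb: "inc_mult E (sc_fbar V E b \<alpha> T) v = (\<Sum>i\<in>{1..T}. Bf i v) / real T"
      unfolding sc_fbar_def Bf_def by (rule inc_mult_lin) simp
    have "S = (\<Sum>i\<in>{1..T}. b v - Bf i v) / real (deg E v)"
      unfolding S_def rdef by (simp add: sum_divide_distrib)
    also have "\<dots> = real T * (b v - inc_mult E (sc_fbar V E b \<alpha> T) v) / real (deg E v)"
      using Tp by (simp add: fb sum_subtractf algebra_simps)
    finally have "b v - inc_mult E (sc_fbar V E b \<alpha> T) v = S * real (deg E v) / real T"
      using Tp d by (simp add: field_simps)
    then have "\<bar>b v - inc_mult E (sc_fbar V E b \<alpha> T) v\<bar> = \<bar>S\<bar> * real (deg E v) / real T"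
      by (simp add: abs_mult abs_divide)
    also have "\<dots> \<le> (5 * \<alpha> * real T) * real (deg E v) / real T"
      using Sb Tp d by (intro divide_right_mono mult_right_mono) auto
    also have "\<dots> = 5 * \<alpha> * real (deg E v)" using Tp by simp
    finally show "\<bar>b v - inc_mult E (sc_fbar V E b \<alpha> T) v\<bar> \<le> 5 * \<alpha> * real (deg E v)" .
  qed
qed

end
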